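(* For every integer $n\ge 1$, the $n$-dimensional volume of \[ \mathcal{T}^n=\left\{x\in\mathbb{R}^n : \|x\|_\infty\le 1 \text{ and } 1+\sum_{i=1}^n x_i\ge 0\right\} \] is \[ \mathrm{Vol}(\mathcal{T}^n) = 2^n \left[1 - \frac{1}{n!}\sum_{k=0}^{\lfloor \frac{n-1}{2} \rfloor} (-1)^k\binom{n}{k} \left(\frac{n-1}{2}-k \right)^n \right]. \]
   Context: $\mathcal{T}^n$ is called the trace nonnegative polytope. Here $0^n$ with $n\ge1$ equals $0$. *)

theory Defs
  imports "HOL-Analysis.Analysis"
begin

definition trace_nonneg_polytope :: "(real ^ 'n) set" where
  "trace_nonneg_polytope =
     {x :: real ^ 'n. (\<forall>i. \<bar>x $ i\<bar> \<le> 1) \<and> 1 + (\<Sum>i\<in>UNIV. x $ i) \<ge> 0}"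

end

theory Submission
  imports Defs
begin
lemma Basis_cart_real: "(Basis :: (real^'n) set) = range (\<lambda>i. axis i 1)"
  by (auto simp: Basis_vec_def)
lemma sum_Basis_cart: "(\<Sum>b\<in>(Basis :: (real^'n) set). x \<bullet> b) = (\<Sum>i\<in>UNIV. x $ i)"
  unfolding Basis_cart_real
  by (subst sum.reindex) (auto simp: inj_on_def axis_eq_axis inner_axis)

definition simp_set :: "real \<Rightarrow> (real^'n::finite) set" where
  "simp_set t = {x. (\<forall>i. 0 \<le> x$i) \<and> (\<Sum>i\<in>UNIV. x$i) \<le> t}"

lemma simp_set_1: "simp_set 1 = (convex hull (insert 0 Basis) :: (real^'n) set)"
proof -
  have "convex hull (insert 0 Basis) = {x::real^'n. (\<forall>b\<in>Basis. 0 \<le> x\<bullet>b) \<and> sum ((\<bullet>) x) Basis \<le> 1}"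
    by (rule std_simplex)
  then show ?thesis by (simp only: sum_Basis_cart) (auto simp: Basis_cart_real inner_axis simp_set_def)
qed

lemma simp_set_scale:
  assumes "t \<ge> 0"
  shows "simp_set t = (\<lambda>x. t *\<^sub>R x + 0) ` (simp_set 1 :: (real^'n) set)"
proof (cases "t = 0")
  case True
  have "simp_set 0 = {0::real^'n}"
  proof safe
    fix x :: "real^'n" assume x: "x \<in> simp_set 0"
    have "\<forall>i\<in>UNIV. x$i = 0"
      using x sum_nonneg[of UNIV "\<lambda>i. x$i"] by (subst sum_nonneg_eq_0_iff[symmetric]) (auto simp: simp_set_def)
    then show "x = 0" by (simp add: vec_eq_iff)
  qed (auto simp: simp_set_def)
  moreover have "(0::real^'n) \<in> simp_set 1" by (simp add: simp_set_def)
  ultimately show ?thesis using True by auto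
next
  case False
  show ?thesis
  proof safe
    fix x :: "real^'n" assume x: "x \<in> simp_set t"
    have "(1/t) *\<^sub>R x \<in> simp_set 1"
      using x False assms
      by (auto simp: simp_set_def sum_divide_distrib[symmetric] divide_simps)
    moreover have "x = t *\<^sub>R ((1/t) *\<^sub>R x) + 0" using False by simp
    ultimately show "x \<in> (\<lambda>x. t *\<^sub>R x + 0) ` simp_set 1" by blast
  next
    fix x :: "real^'n" assume x: "x \<in> simp_set 1"
    then show "t *\<^sub>R x + 0 \<in> simp_set t"
      using assms by (auto simp: simp_set_def sum_distrib_left[symmetric] mult_left_le)
  qed
qed

lemma simp_set_measure:
  assumes "t \<ge> 0"
  shows "(simp_set t :: (real^'n::finite) set) \<in> lmeasurable \<and>
    measure lebesgue (simp_set t :: (real^'n) set) = t ^ CARD('n) / fact CARD('n)"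
proof
  have c: "compact (simp_set 1 :: (real^'n) set)"
    unfolding simp_set_1 by (simp add: finite_imp_compact_convex_hull)
  have "compact (simp_set t :: (real^'n) set)"
    unfolding simp_set_scale[OF assms] using compact_scaling[OF c, of t] by simp
  then show "(simp_set t :: (real^'n) set) \<in> lmeasurable" by (rule lmeasurable_compact)
  have m1: "measure lebesgue (simp_set 1 :: (real^'n) set) = 1 / fact CARD('n)"
    unfolding simp_set_1
    by (subst measure_completion) (auto intro!: borel_closed compact_imp_closed finite_imp_compact_convex_hull simp: content_std_simplex)
  show "measure lebesgue (simp_set t :: (real^'n) set) = t ^ CARD('n) / fact CARD('n)"
    unfolding simp_set_scale[OF assms] measure_lebesgue_affine m1 using assms by simp
qed

lemma almost_simplex:
  fixes D :: "(real^'n::finite) set" and s :: real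
  assumes sub: "D \<subseteq> simp_set s"
    and diff: "simp_set s - D \<subseteq> {z. (\<Sum>i\<in>UNIV. z$i) = s} \<union> (\<Union>i. {z. z$i = 0})"
  shows "D \<in> lmeasurable \<and> measure lebesgue D = (if s \<ge> 0 then s ^ CARD('n) / fact CARD('n) else 0)"
proof (cases "s \<ge> 0")
  case False
  have "simp_set s = ({} :: (real^'n) set)"
  proof safe
    fix x :: "real^'n" assume "x \<in> simp_set s"
    then show "x \<in> {}" using sum_nonneg[of UNIV "\<lambda>i. x$i"] False by (auto simp: simp_set_def)
  qed
  then show ?thesis using sub False by auto
next
  case True
  have n1: "negligible {z::real^'n. (\<Sum>i\<in>UNIV. z$i) = s}"
  proof -
    have "{z::real^'n. (\<Sum>i\<in>UNIV. z$i) = s} = {z. vec 1 \<bullet> z = s}"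
      by (simp add: inner_vec_def)
    then show ?thesis using negligible_hyperplane[of "vec 1 :: real^'n" s]
      by (simp add: vec_eq_iff)
  qed
  have n2: "negligible (\<Union>i. {z::real^'n. z$i = 0})"
  proof (rule negligible_Union)
    show "finite (range (\<lambda>i. {z::real^'n. z$i = 0}))" by simp
  next
    fix T assume "T \<in> range (\<lambda>i. {z::real^'n. z$i = 0})"
    then obtain i where T: "T = {z::real^'n. z$i = 0}" by auto
    have "T = {z. axis i 1 \<bullet> z = 0}"
      unfolding T by (simp add: inner_commute inner_axis)
    then show "negligible T" using negligible_hyperplane[of "axis i (1::real)" 0]
      by (simp add: axis_eq_0_iff)
  qed
  have neg: "negligible (simp_set s - D \<union> (D - simp_set s))"
    using sub diff negligible_subset[OF negligible_Un[OF n1 n2]] by auto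
  have m: "simp_set s \<in> lmeasurable" "measure lebesgue (simp_set s :: (real^'n) set) = s ^ CARD('n) / fact CARD('n)"
    using simp_set_measure[OF True] by auto
  show ?thesis using True m lmeasurable_negligible_symdiff[OF m(1) neg] measure_negligible_symdiff[OF m(1) neg]
    by simp
qed

lemma sum_Pow_card:
  fixes g :: "nat \<Rightarrow> real"
  assumes "finite A"
  shows "(\<Sum>K\<in>Pow A. g (card K)) = (\<Sum>k=0..card A. real (card A choose k) * g k)"
proof -
  have "(\<Sum>K\<in>Pow A. g (card K)) = (\<Sum>k=0..card A. \<Sum>K\<in>{K \<in> Pow A. card K = k}. g (card K))"
    using assms by (intro sum.group[symmetric]) (auto intro: card_mono)
  also have "\<dots> = (\<Sum>k=0..card A. real (card A choose k) * g k)"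
  proof (rule sum.cong[OF refl])
    fix k
    have "(\<Sum>K\<in>{K \<in> Pow A. card K = k}. g (card K)) = (\<Sum>K\<in>{K \<in> Pow A. card K = k}. g k)"
      by (rule sum.cong) auto
    also have "\<dots> = real (card {K. K \<subseteq> A \<and> card K = k}) * g k" by simp
    also have "\<dots> = real (card A choose k) * g k" using n_subsets[OF assms] by simp
    finally show "(\<Sum>K\<in>{K \<in> Pow A. card K = k}. g (card K)) = real (card A choose k) * g k" .
  qed
  finally show ?thesis .
qed

definition Eset :: "'n set \<Rightarrow> (real^'n::finite) set" where
  "Eset K = {y. (\<forall>i. 0 \<le> y$i) \<and> (\<Sum>i\<in>UNIV. y$i) < real CARD('n) - 1 \<and> (\<forall>i\<in>K. 2 < y$i)}"

lemma Eset_measure: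
  "(Eset K :: (real^'n::finite) set) \<in> lmeasurable \<and>
   measure lebesgue (Eset K :: (real^'n) set) =
     (if 0 \<le> real CARD('n) - 1 - 2 * real (card K)
      then (real CARD('n) - 1 - 2 * real (card K)) ^ CARD('n) / fact CARD('n) else 0)"
proof -
  define c :: "real^'n" where "c = (\<chi> i. if i \<in> K then 2 else 0)"
  define s where "s = real CARD('n) - 1 - 2 * real (card K)"
  define D where "D = (\<lambda>y. y - c) ` (Eset K :: (real^'n) set)"
  have sc: "(\<Sum>i\<in>UNIV. c$i) = 2 * real (card K)"
    by (simp add: c_def sum.If_cases)
  have Dchar: "z \<in> D \<longleftrightarrow> z + c \<in> Eset K" for z
    unfolding D_def image_iff
  proof
    assume "z + c \<in> Eset K" then show "\<exists>x\<in>Eset K. z = x - c" by (intro bexI[of _ "z + c"]) auto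
  qed auto
  have sumzc: "(\<Sum>i\<in>UNIV. (z + c)$i) = (\<Sum>i\<in>UNIV. z$i) + 2 * real (card K)" for z :: "real^'n"
    using sc by (simp add: sum.distrib)
  have sub: "D \<subseteq> simp_set s"
  proof
    fix z assume "z \<in> D"
    then have z: "z + c \<in> Eset K" by (simp add: Dchar)
    have "0 \<le> z$i" for i
    proof -
      have "0 \<le> (z + c)$i" "i \<in> K \<longrightarrow> 2 < (z+c)$i" using z by (auto simp: Eset_def)
      then show ?thesis by (cases "i \<in> K") (auto simp: c_def)
    qed
    moreover have "(\<Sum>i\<in>UNIV. z$i) \<le> s"
      using z sumzc[of z] by (auto simp: Eset_def s_def)
    ultimately show "z \<in> simp_set s" by (simp add: simp_set_def)
  qed
  have diff: "simp_set s - D \<subseteq> {z. (\<Sum>i\<in>UNIV. z$i) = s} \<union> (\<Union>i. {z. z$i = 0})"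
  proof
    fix z assume z: "z \<in> simp_set s - D"
    then have z1: "\<forall>i. 0 \<le> z$i" "(\<Sum>i\<in>UNIV. z$i) \<le> s" and z2: "z + c \<notin> Eset K"
      by (auto simp: simp_set_def Dchar)
    have nn: "\<forall>i. 0 \<le> (z + c)$i" using z1 by (auto simp: c_def)
    show "z \<in> {z. (\<Sum>i\<in>UNIV. z$i) = s} \<union> (\<Union>i. {z. z$i = 0})"
    proof (cases "(\<Sum>i\<in>UNIV. z$i) = s")
      case False
      then have "(\<Sum>i\<in>UNIV. (z + c)$i) < real CARD('n) - 1"
        using z1 sumzc[of z] by (simp add: s_def)
      with z2 nn obtain i where "i \<in> K" "\<not> 2 < (z + c)$i" by (auto simp: Eset_def)
      then have "z$i = 0" using z1(1) by (auto simp: c_def intro: order.antisym[of "z$i" 0] spec[of _ i])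
      then show ?thesis by blast
    qed simp
  qed
  have mD: "D \<in> lmeasurable" "measure lebesgue D = (if s \<ge> 0 then s ^ CARD('n) / fact CARD('n) else 0)"
    using almost_simplex[OF sub diff] by auto
  have ED: "Eset K = (+) c ` D"
    unfolding D_def image_image by simp
  have "Eset K \<in> lmeasurable" using measurable_translation[OF mD(1), of c] ED by simp
  moreover have "measure lebesgue (Eset K) = measure lebesgue D"
    using measure_translation[of c D] ED by simp
  ultimately show ?thesis
    using mD unfolding s_def by simp
qed

definition fk :: "nat \<Rightarrow> nat \<Rightarrow> real" where
  "fk n k = (if 0 \<le> real n - 1 - 2 * real k then (real n - 1 - 2 * real k) ^ n / fact n else 0)"

definition Yset :: "(real^'n::finite) set" where
  "Yset = {y. (\<forall>i. 0 \<le> y$i \<and> y$i \<le> 2) \<and> (\<Sum>i\<in>UNIV. y$i) < real CARD('n) - 1}"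

lemma Yset_measure:
  "(Yset :: (real^'n::finite) set) \<in> lmeasurable \<and>
   measure lebesgue (Yset :: (real^'n) set) =
     (\<Sum>k=0..CARD('n). real (CARD('n) choose k) * ((-1)^k * fk CARD('n) k))"
proof -
  let ?E = "Eset :: 'n set \<Rightarrow> (real^'n) set"
  define B where "B i = ?E {i}" for i
  have Em: "?E K \<in> lmeasurable" "measure lebesgue (?E K) = fk CARD('n) (card K)" for K
    using Eset_measure[of K] by (auto simp: fk_def)
  interpret IE: Incl_Excl "\<lambda>S. S \<in> (lmeasurable :: (real^'n) set set)" "measure lebesgue"
  proof
    fix S T :: "(real^'n) set"
    assume "S \<in> lmeasurable" "T \<in> lmeasurable" "disjnt S T"
    then show "measure lebesgue (S \<union> T) = measure lebesgue S + measure lebesgue T"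
      using measure_Un2[of S lebesgue T] by (simp add: disjnt_def Diff_triv Int_commute)
  qed (auto intro: fmeasurable.Int fmeasurable.Un fmeasurable.Diff)
  have IEq: "measure lebesgue (\<Union>(B ` UNIV)) =
      (\<Sum>K | K \<subseteq> UNIV \<and> K \<noteq> {}. (- 1) ^ (card K + 1) * measure lebesgue (\<Inter> (B ` K)))"
    by (rule IE.restricted_indexed) (auto simp: B_def Em)
  have inter: "\<Inter> (B ` K) = ?E K" if "K \<noteq> {}" for K
    using that by (auto simp: B_def Eset_def)
  have Ydef: "(Yset :: (real^'n) set) = ?E {} - \<Union>(B ` UNIV)"
    by (auto simp: Yset_def B_def Eset_def not_less) (meson linorder_not_le)
  have Um: "\<Union>(B ` UNIV) \<in> lmeasurable"
    by (rule fmeasurable.finite_UN) (auto simp: B_def Em)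
  have Usub: "\<Union>(B ` UNIV) \<subseteq> ?E {}" by (auto simp: B_def Eset_def)
  have Ym: "(Yset :: (real^'n) set) \<in> lmeasurable"
    unfolding Ydef using Em(1) Um by (rule fmeasurable.Diff)
  have "measure lebesgue (Yset :: (real^'n) set) = measure lebesgue (?E {}) - measure lebesgue (\<Union>(B ` UNIV))"
    unfolding Ydef using measure_Un2[OF Um Em(1)[of "{}"]] Usub by (simp add: Un_absorb1)
  also have "\<dots> = fk CARD('n) 0 -
      (\<Sum>K | K \<subseteq> (UNIV :: 'n set) \<and> K \<noteq> {}. (- 1) ^ (card K + 1) * fk CARD('n) (card K))"
    unfolding IEq Em by (intro arg_cong2[where f="(-)"] sum.cong) (auto simp: inter Em)
  also have "\<dots> = (\<Sum>K\<in>Pow (UNIV :: 'n set). (-1) ^ card K * fk CARD('n) (card K))"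
  proof -
    have P: "Pow (UNIV :: 'n set) = insert {} {K. K \<subseteq> UNIV \<and> K \<noteq> {}}" by auto
    show ?thesis unfolding P
      by (subst sum.insert) (auto simp: sum_negf[symmetric])
  qed
  also have "\<dots> = (\<Sum>k=0..CARD('n). real (CARD('n) choose k) * ((-1)^k * fk CARD('n) k))"
    using sum_Pow_card[of "UNIV :: 'n set" "\<lambda>k. (-1)^k * fk CARD('n) k"] by simp
  finally show ?thesis using Ym by simp
qed

lemma le_m_iff:
  assumes "n \<ge> 1"
  shows "k \<le> nat \<lfloor>(real n - 1) / 2\<rfloor> \<longleftrightarrow> 0 \<le> real n - 1 - 2 * real k"
proof -
  have "0 \<le> \<lfloor>(real n - 1) / 2\<rfloor>" using assms by simp
  then have "k \<le> nat \<lfloor>(real n - 1) / 2\<rfloor> \<longleftrightarrow> int k \<le> \<lfloor>(real n - 1) / 2\<rfloor>" by (rule le_nat_iff)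
  also have "\<dots> \<longleftrightarrow> real k \<le> (real n - 1) / 2" by (simp add: le_floor_iff)
  also have "\<dots> \<longleftrightarrow> 0 \<le> real n - 1 - 2 * real k" using pos_le_divide_eq[of 2 "real k" "real n - 1"] by linarith
  finally show ?thesis .
qed

lemma final_alg:
  assumes "n \<ge> 1"
  shows "(\<Sum>k=0..n. real (n choose k) * ((-1)^k * fk n k)) =
    2 ^ n / fact n * (\<Sum>k = 0..nat \<lfloor>(real n - 1) / 2\<rfloor>.
          (-1) ^ k * real (n choose k) * ((real n - 1) / 2 - real k) ^ n)"
proof -
  let ?m = "nat \<lfloor>(real n - 1) / 2\<rfloor>"
  have "0 \<le> real n - 1 - 2 * real ?m" using le_m_iff[OF assms, of ?m] by simp
  then have "real ?m \<le> real n" by linarith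
  then have mn: "?m \<le> n" by simp
  have "(\<Sum>k=0..n. real (n choose k) * ((-1)^k * fk n k)) = (\<Sum>k=0..?m. real (n choose k) * ((-1)^k * fk n k))"
    apply (rule sum.mono_neutral_right)
      apply simp
    using mn apply simp
  proof
    fix k assume "k \<in> {0..n} - {0..?m}"
    then have "\<not> 0 \<le> real n - 1 - 2 * real k" using le_m_iff[OF assms, of k] by auto
    then show "real (n choose k) * ((-1)^k * fk n k) = 0" by (simp add: fk_def)
  qed
  also have "\<dots> = (\<Sum>k=0..?m. 2 ^ n / fact n * ((-1) ^ k * real (n choose k) * ((real n - 1) / 2 - real k) ^ n))"
  proof (rule sum.cong[OF refl])
    fix k assume "k \<in> {0..?m}"
    then have k: "0 \<le> real n - 1 - 2 * real k" using le_m_iff[OF assms] by auto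
    have e: "real n - 1 - 2 * real k = 2 * ((real n - 1) / 2 - real k)" by simp
    have "(real n - 1 - 2 * real k) ^ n = 2 ^ n * ((real n - 1) / 2 - real k) ^ n"
      by (metis e power_mult_distrib)
    then show "real (n choose k) * ((-1)^k * fk n k) = 2 ^ n / fact n * ((-1) ^ k * real (n choose k) * ((real n - 1) / 2 - real k) ^ n)"
      using k by (simp add: fk_def)
  qed
  also have "\<dots> = 2 ^ n / fact n * (\<Sum>k = 0..?m. (-1) ^ k * real (n choose k) * ((real n - 1) / 2 - real k) ^ n)"
    by (simp add: sum_distrib_left)
  finally show ?thesis .
qed

theorem corollary1:
  fixes n :: nat
  assumes "CARD('n::finite) = n"
  shows "measure lebesgue (trace_nonneg_polytope :: (real ^ 'n) set) =
    2 ^ n * (1 - (1 / fact n) *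
      (\<Sum>k = 0..nat \<lfloor>(real n - 1) / 2\<rfloor>.
          (-1) ^ k * real (n choose k) * ((real n - 1) / 2 - real k) ^ n))"
proof -
  have "0 < CARD('n)" by simp
  then have n1: "n \<ge> 1" using assms by simp
  define Q :: "(real^'n) set" where "Q = cbox (vec (-1)) (vec 1)"
  define C :: "(real^'n) set" where "C = (\<lambda>y. y - vec 1) ` Yset"
  have Cchar: "x \<in> C \<longleftrightarrow> x + vec 1 \<in> Yset" for x
    unfolding C_def image_iff
  proof
    assume "x + vec 1 \<in> Yset" then show "\<exists>y\<in>Yset. x = y - vec 1" by (intro bexI[of _ "x + vec 1"]) auto
  qed auto
  have sum1: "(\<Sum>i\<in>UNIV. (x + vec 1)$i) = (\<Sum>i\<in>UNIV. x$i) + real n" for x :: "real^'n"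
    using assms by (simp add: sum.distrib)
  have sum1': "(\<Sum>i\<in>UNIV. x$i + 1) = (\<Sum>i\<in>UNIV. x$i) + real n" for x :: "real^'n"
    using assms by (simp add: sum.distrib)
  have Qchar: "x \<in> Q \<longleftrightarrow> (\<forall>i. \<bar>x$i\<bar> \<le> 1)" for x
    by (auto simp: Q_def mem_box_cart abs_le_iff)
  have T: "(trace_nonneg_polytope :: (real^'n) set) = Q - C"
    unfolding trace_nonneg_polytope_def
    apply (auto simp: Qchar Cchar Yset_def sum1' assms abs_le_iff)
    by (smt (verit, best))
  have CQ: "C \<subseteq> Q"
    apply (auto simp: Qchar Cchar Yset_def abs_le_iff)
    by (smt (verit, best))
  have Ym: "(Yset :: (real^'n) set) \<in> lmeasurable" using Yset_measure by blast
  have Cm: "C \<in> lmeasurable" unfolding C_def by (rule measurable_translation_subtract[OF Ym])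
  have Qm: "Q \<in> lmeasurable" unfolding Q_def by simp
  have mQ: "measure lebesgue Q = 2 ^ n"
  proof -
    have "vec 0 \<in> Q" by (simp add: Q_def mem_box_cart)
    then have ne: "Q \<noteq> {}" by auto
    have "measure lebesgue Q = measure lborel Q" unfolding Q_def by (subst measure_completion) auto
    also have "\<dots> = (\<Prod>i\<in>UNIV. (vec 1 :: real^'n)$i - (vec (-1) :: real^'n)$i)"
      using ne unfolding Q_def by (rule content_cbox_cart)
    also have "\<dots> = 2 ^ n" using assms by simp
    finally show ?thesis .
  qed
  have "measure lebesgue (trace_nonneg_polytope :: (real^'n) set) = measure lebesgue Q - measure lebesgue C"
    unfolding T using measure_Un2[OF Cm Qm] CQ by (simp add: Un_absorb1)
  also have "measure lebesgue C = measure lebesgue (Yset :: (real^'n) set)"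
    unfolding C_def by (rule measure_translation_subtract)
  also have "\<dots> = (\<Sum>k=0..n. real (n choose k) * ((-1)^k * fk n k))"
    using Yset_measure assms by auto
  also have "\<dots> = 2 ^ n / fact n * (\<Sum>k = 0..nat \<lfloor>(real n - 1) / 2\<rfloor>.
          (-1) ^ k * real (n choose k) * ((real n - 1) / 2 - real k) ^ n)"
    by (rule final_alg[OF n1])
  finally show ?thesis unfolding mQ by (simp add: algebra_simps)
qed
end
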